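(* Let $p\ge5$, write $x=p-2$, and consider the black metallic tree $\mathcal B_\rho$ under the rightmost assignment (the last son of each node is black). For a node $\nu$ let $u$ be the nzm-code of $\nu-1$ and $v$ the nzm-code of $\nu-2$. Then the sons of the nodes, in increasing order, have the following nzm-codes: (1) root $\nu=1$: the sons are $h+1$ (one digit) for $h=1,\dots,p-4$, then $x$; (2) black $\nu\neq1$: the sons are $u\,h$ for $h=1,\dots,p-3$; (3) white $\nu$ with nzm-signature $1$ or $x$: first son $v\,x$, then $u\,(h-1)$ for $h=2,\dots,p-2$; (4) white $\nu$ with nzm-signature $a$, $1<a<x$: the sons $u\,h$ for $h=1,\dots,p-3$, then $u\,x$. Moreover: $\mathcal B_\rho$ does not have a preferred son property for the nzm-codes, whatever the digit chosen; for every node $\nu$, the integer whose nzm-code is the nzm-code of $\nu$ followed by $1$ (the successor of $\nu$) is a son of $\nu+1$ in $\mathcal B_\rho$, namely its leftmost son or its second son; and for no assignment $\alpha$ on the black metallic tree and no digit $a\in\{1,\dots,p-2\}$ does every node $\nu$ of $\mathcal B_\alpha$ have exactly one son whose nzm-code is the nzm-code of $\nu$ followed by $a$.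
   Context: Fix $p\ge5$. Metallic numbers: $m_{-1}=0$, $m_0=1$, $m_{n+2}=(p-2)m_{n+1}-m_n$. With $x=p-2$, $d=p-3$, the nzm-code of a positive integer $n$ is the unique word $a_k\cdots a_0$ over $\{1,\dots,p-2\}$ with $n=\sum a_im_i$ containing no factor $x\,d^j\,x$ ($j\ge0$); its nzm-signature is the last digit $a_0$; $w\,e$ denotes the word $w$ followed by the digit $e$. Black metallic tree under an assignment $\alpha$, $\mathcal B_\alpha$: nodes are the positive integers, each black or white; the root $1$ is black; nodes are processed in increasing order and node $\nu$ receives $p-2$ sons if white and $p-3$ sons if black, namely the smallest integers not yet used, in increasing order; an assignment specifies for each node the position (leftmost $=1$) of its unique black son among its sons, other sons being white. The rightmost assignment $\rho$ puts the black son at the last position. *)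

theory Defs
  imports Main
begin

text \<open>Metallic numbers: metal p i = m_i for i \<ge> 0 (m_0 = 1, m_1 = p - 2, recurrence
  m_(n+2) = (p-2) m_(n+1) - m_n; with m_(-1) = 0 this gives m_1 = p - 2).\<close>
fun metal :: "nat \<Rightarrow> nat \<Rightarrow> nat" where
  "metal p 0 = 1"
| "metal p (Suc 0) = p - 2"
| "metal p (Suc (Suc n)) = (p - 2) * metal p (Suc n) - metal p n"

text \<open>Words are lists written most significant digit first: [a_k, ..., a_0].\<close>
definition nzm_val :: "nat \<Rightarrow> nat list \<Rightarrow> nat" where
  "nzm_val p w = (\<Sum>i<length w. rev w ! i * metal p i)"

definition nzm_admissible :: "nat \<Rightarrow> nat list \<Rightarrow> bool" where
  "nzm_admissible p w \<longleftrightarrow> set w \<subseteq> {1..p - 2} \<and>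
     \<not> (\<exists>u j v. w = u @ [p - 2] @ replicate j (p - 3) @ [p - 2] @ v)"

definition nzm_code :: "nat \<Rightarrow> nat \<Rightarrow> nat list" where
  "nzm_code p n = (THE w. nzm_admissible p w \<and> nzm_val p w = n)"

definition nzm_signature :: "nat \<Rightarrow> nat \<Rightarrow> nat" where
  "nzm_signature p n = last (nzm_code p n)"

text \<open>The choice function c receives the node
  and its number of sons and returns the position (leftmost = 1) of the black son.
  mt_build p c n = (colouring of the nodes assigned so far, smallest unused integer)
  after processing nodes 1..n.\<close>
primrec mt_build :: "nat \<Rightarrow> (nat \<Rightarrow> nat \<Rightarrow> nat) \<Rightarrow> nat \<Rightarrow> (nat \<Rightarrow> bool) \<times> nat" where
  "mt_build p c 0 = ((\<lambda>i. i = 1), 2)"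
| "mt_build p c (Suc n) =
     (let b = fst (mt_build p c n); nx = snd (mt_build p c n);
          dg = (if b (Suc n) then p - 3 else p - 2)
      in ((\<lambda>i. if nx \<le> i \<and> i < nx + dg then i - nx + 1 = c (Suc n) dg else b i), nx + dg))"

definition mt_black :: "nat \<Rightarrow> (nat \<Rightarrow> nat \<Rightarrow> nat) \<Rightarrow> nat \<Rightarrow> bool" where
  "mt_black p c \<nu> = fst (mt_build p c \<nu>) \<nu>"

definition mt_deg :: "nat \<Rightarrow> (nat \<Rightarrow> nat \<Rightarrow> nat) \<Rightarrow> nat \<Rightarrow> nat" where
  "mt_deg p c \<nu> = (if mt_black p c \<nu> then p - 3 else p - 2)"

definition mt_first :: "nat \<Rightarrow> (nat \<Rightarrow> nat \<Rightarrow> nat) \<Rightarrow> nat \<Rightarrow> nat" where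
  "mt_first p c \<nu> = snd (mt_build p c (\<nu> - 1))"

definition mt_sons :: "nat \<Rightarrow> (nat \<Rightarrow> nat \<Rightarrow> nat) \<Rightarrow> nat \<Rightarrow> nat list" where
  "mt_sons p c \<nu> = [mt_first p c \<nu> ..< mt_first p c \<nu> + mt_deg p c \<nu>]"

definition assign :: "(nat \<Rightarrow> nat) \<Rightarrow> nat \<Rightarrow> nat \<Rightarrow> nat" where
  "assign \<alpha> = (\<lambda>\<nu> dg. \<alpha> \<nu>)"

definition valid_assignment :: "nat \<Rightarrow> (nat \<Rightarrow> nat) \<Rightarrow> bool" where
  "valid_assignment p \<alpha> \<longleftrightarrow> (\<forall>\<nu>\<ge>1. 1 \<le> \<alpha> \<nu> \<and> \<alpha> \<nu> \<le> mt_deg p (assign \<alpha>) \<nu>)"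

definition rightmost :: "nat \<Rightarrow> nat \<Rightarrow> nat" where
  "rightmost = (\<lambda>\<nu> dg. dg)"

end

theory Submission
  imports Defs
begin


fun vr :: "nat \<Rightarrow> nat \<Rightarrow> nat list \<Rightarrow> int" where
  "vr p k [] = 0"
| "vr p k (a # r) = int a * int (metal p k) + vr p (Suc k) r"

definition vi :: "nat \<Rightarrow> nat \<Rightarrow> nat list \<Rightarrow> int" where
  "vi p k w = vr p k (rev w)"

definition Tw :: "nat \<Rightarrow> nat list \<Rightarrow> bool" where
  "Tw p w \<longleftrightarrow> (\<exists>u j. w = u @ [p - 2] @ replicate j (p - 3))"

fun incr :: "nat \<Rightarrow> nat list \<Rightarrow> nat list" where
  "incr p [] = [1]"
| "incr p (a # r) = (if a < p - 2 \<and> \<not> (a = p - 3 \<and> Tw p (rev r)) then Suc a # r else 1 # incr p r)"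

definition inc :: "nat \<Rightarrow> nat list \<Rightarrow> nat list" where
  "inc p w = rev (incr p (rev w))"

definition cw :: "nat \<Rightarrow> nat \<Rightarrow> nat list" where
  "cw p n = (inc p ^^ n) []"

lemma inc_Nil[simp]: "inc p [] = [1]"
  by (simp add: inc_def)

lemma inc_snoc: "inc p (w @ [a]) = (if a < p - 2 \<and> \<not> (a = p - 3 \<and> Tw p w) then w @ [Suc a] else inc p w @ [1])"
  by (auto simp: inc_def)

lemma vi_Nil[simp]: "vi p k [] = 0"
  by (simp add: vi_def)

lemma vi_snoc: "vi p k (w @ [a]) = int a * int (metal p k) + vi p (Suc k) w"
  by (simp add: vi_def)

lemma vr_sum: "vr p k r = (\<Sum>i<length r. int (r ! i) * int (metal p (i + k)))"
proof (induction r arbitrary: k)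
  case Nil
  then show ?case by simp
next
  case (Cons a r)
  show ?case
    by (simp add: Cons sum.lessThan_Suc_shift del: sum.lessThan_Suc)
qed

lemma nzm_val_vi: "int (nzm_val p w) = vi p 0 w"
  by (simp add: nzm_val_def vi_def vr_sum of_nat_sum)

lemma Tw_Nil[simp]: "\<not> Tw p []"
  by (simp add: Tw_def)

lemma Tw_snoc: "Tw p (w @ [a]) \<longleftrightarrow> a = p - 2 \<or> (a = p - 3 \<and> Tw p w)"
proof
  assume "Tw p (w @ [a])"
  then obtain u j where e: "w @ [a] = u @ [p - 2] @ replicate j (p - 3)" unfolding Tw_def by blast
  show "a = p - 2 \<or> (a = p - 3 \<and> Tw p w)"
  proof (cases j)
    case 0
    then show ?thesis using e by simp
  next
    case (Suc j')
    then have "w @ [a] = (u @ [p - 2] @ replicate j' (p - 3)) @ [p - 3]"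
      using e by (simp add: replicate_append_same[symmetric])
    then have "a = p - 3" "w = u @ [p - 2] @ replicate j' (p - 3)" by simp_all
    then show ?thesis unfolding Tw_def by blast
  qed
next
  assume "a = p - 2 \<or> (a = p - 3 \<and> Tw p w)"
  then show "Tw p (w @ [a])"
  proof
    assume "a = p - 2"
    then have "w @ [a] = w @ [p - 2] @ replicate 0 (p - 3)" by simp
    then show ?thesis unfolding Tw_def by blast
  next
    assume "a = p - 3 \<and> Tw p w"
    then obtain u j where "a = p - 3" "w = u @ [p - 2] @ replicate j (p - 3)" unfolding Tw_def by blast
    then have "w @ [a] = u @ [p - 2] @ replicate (Suc j) (p - 3)"
      by (simp add: replicate_append_same[symmetric])
    then show ?thesis unfolding Tw_def by blast
  qed
qed

lemma pat_snoc: "(\<exists>u j v. w @ [a] = u @ [p - 2] @ replicate j (p - 3) @ [p - 2] @ v) \<longleftrightarrow>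
   (\<exists>u j v. w = u @ [p - 2] @ replicate j (p - 3) @ [p - 2] @ v) \<or> (a = p - 2 \<and> Tw p w)"
proof
  assume "\<exists>u j v. w @ [a] = u @ [p - 2] @ replicate j (p - 3) @ [p - 2] @ v"
  then obtain u j v where e: "w @ [a] = u @ [p - 2] @ replicate j (p - 3) @ [p - 2] @ v" by blast
  show "(\<exists>u j v. w = u @ [p - 2] @ replicate j (p - 3) @ [p - 2] @ v) \<or> (a = p - 2 \<and> Tw p w)"
  proof (cases v rule: rev_exhaust)
    case Nil
    then have "w @ [a] = (u @ [p - 2] @ replicate j (p - 3)) @ [p - 2]" using e by simp
    then have "a = p - 2" "w = u @ [p - 2] @ replicate j (p - 3)" by simp_all
    then show ?thesis unfolding Tw_def by blast
  next
    case (snoc v' b)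
    then have "w @ [a] = (u @ [p - 2] @ replicate j (p - 3) @ [p - 2] @ v') @ [b]" using e by simp
    then have "w = u @ [p - 2] @ replicate j (p - 3) @ [p - 2] @ v'" by simp
    then show ?thesis by blast
  qed
next
  assume "(\<exists>u j v. w = u @ [p - 2] @ replicate j (p - 3) @ [p - 2] @ v) \<or> (a = p - 2 \<and> Tw p w)"
  then show "\<exists>u j v. w @ [a] = u @ [p - 2] @ replicate j (p - 3) @ [p - 2] @ v"
  proof
    assume "\<exists>u j v. w = u @ [p - 2] @ replicate j (p - 3) @ [p - 2] @ v"
    then obtain u j v where "w = u @ [p - 2] @ replicate j (p - 3) @ [p - 2] @ v" by blast
    then have "w @ [a] = u @ [p - 2] @ replicate j (p - 3) @ [p - 2] @ (v @ [a])" by simp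
    then show ?thesis by blast
  next
    assume "a = p - 2 \<and> Tw p w"
    then obtain u j where "a = p - 2" "w = u @ [p - 2] @ replicate j (p - 3)" unfolding Tw_def by blast
    then have "w @ [a] = u @ [p - 2] @ replicate j (p - 3) @ [p - 2] @ []" by simp
    then show ?thesis by blast
  qed
qed

lemma adm_Nil[simp]: "nzm_admissible p []"
  by (simp add: nzm_admissible_def)

lemma adm_snoc: "nzm_admissible p (w @ [a]) \<longleftrightarrow>
   nzm_admissible p w \<and> 1 \<le> a \<and> a \<le> p - 2 \<and> \<not> (a = p - 2 \<and> Tw p w)"
  unfolding nzm_admissible_def using pat_snoc[of w a p] by auto

definition bl :: "nat \<Rightarrow> nat \<Rightarrow> nat \<Rightarrow> bool" where
  "bl p n = fst (mt_build p rightmost n)"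
definition ff :: "nat \<Rightarrow> nat \<Rightarrow> nat" where
  "ff p n = snd (mt_build p rightmost n)"

lemma ff_0: "ff p 0 = 2" by (simp add: ff_def)
lemma bl_0: "bl p 0 i = (i = 1)" by (simp add: bl_def)
lemma ff_Suc: "ff p (Suc n) = ff p n + (if bl p n (Suc n) then p - 3 else p - 2)"
  by (simp add: ff_def bl_def Let_def)
lemma bl_Suc: "bl p (Suc n) i = (if ff p n \<le> i \<and> i < ff p (Suc n) then Suc i = ff p (Suc n) else bl p n i)"
  unfolding ff_Suc by (auto simp add: ff_def bl_def Let_def rightmost_def)

lemma ident1:
  fixes a c x d :: nat
  assumes "x \<ge> 3" "d + 1 = x" "c = (if T then d else x)" "1 \<le> a" "a < c" "Bn \<longleftrightarrow> a + of_bool e = c"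
    "Tk \<longleftrightarrow> a = 1" "En \<longleftrightarrow> \<not> Bn \<and> (a = 1 \<or> a = x)" "B2 \<longleftrightarrow> a + 1 + of_bool e = c"
    "E2 \<longleftrightarrow> \<not> B2 \<and> (a + 1 = 1 \<or> a + 1 = x)" "T \<Longrightarrow> \<not> e"
  shows "of_bool E2 + of_bool Tk = (of_bool Bn + of_bool En :: nat)"
  using assms by (cases T; cases e) auto

lemma ident2:
  fixes a c c1 x d :: nat
  assumes "x \<ge> 3" "d + 1 = x" "c = (if T then d else x)" "c1 = (if T1 then d else x)" "a = c"
    "Bn \<longleftrightarrow> a + of_bool e = c"
    "Tk \<longleftrightarrow> a = 1" "En \<longleftrightarrow> \<not> Bn \<and> (a = 1 \<or> a = x)" "B2 \<longleftrightarrow> 1 + of_bool e2 = c1"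
    "E2 \<longleftrightarrow> \<not> B2" "T \<Longrightarrow> \<not> e" "T1 \<Longrightarrow> \<not> e2"
  shows "of_bool E2 + of_bool Tk = (of_bool Bn + of_bool En :: nat)"
  using assms by (cases T; cases e; cases T1; cases e2) auto

lemma ident3:
  fixes f f1 s s1 x d :: nat
  assumes "x \<ge> 3" "d + 1 = x" "f1 = f + (if Bn then d else x)" "s1 = s + (if T then d else x)"
    "f + of_bool Ek = s + 1" "of_bool E2 + of_bool T = (of_bool Bn + of_bool Ek :: nat)"
  shows "f1 + of_bool E2 = s1 + 1"
  using assms by (cases Bn; cases T; cases Ek; cases E2) auto

context
  fixes p :: nat
  assumes p5: "p \<ge> 5"
begin

lemma metal_mono: "metal p n \<le> metal p (Suc n) \<and> 1 \<le> metal p n"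
proof (induction n rule: less_induct)
  case (less n)
  show ?case
  proof (cases n)
    case 0
    then show ?thesis using p5 by simp
  next
    case (Suc k)
    note IH = less[of k]
    then have e: "metal p (Suc n) = (p - 2) * metal p n - metal p k" using Suc by simp
    have "(p - 2) * metal p n \<ge> 3 * metal p n" using p5 by (intro mult_le_mono1) simp
    moreover have "metal p k \<le> metal p n" "1 \<le> metal p k" using IH Suc by auto
    ultimately have "metal p n \<le> metal p (Suc n)" "1 \<le> metal p n" unfolding e by linarith+
    then show ?thesis by simp
  qed
qed

lemma metal_rec: "int (metal p (Suc (Suc n))) = int (p - 2) * int (metal p (Suc n)) - int (metal p n)"
proof -
  have "(p - 2) * metal p (Suc n) \<ge> metal p n"
  proof -
    have "metal p n \<le> metal p (Suc n)" using metal_mono[of n] by simp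
    also have "\<dots> \<le> (p - 2) * metal p (Suc n)" using p5 by (simp add: Suc_le_eq)
    finally show ?thesis .
  qed
  then show ?thesis by (simp add: of_nat_diff)
qed

lemma vr_rec: "vr p (Suc (Suc k)) r = int (p - 2) * vr p (Suc k) r - vr p k r"
proof (induction r arbitrary: k)
  case Nil
  then show ?case by simp
next
  case (Cons a r)
  have "vr p (Suc (Suc k)) (a # r) = int a * int (metal p (Suc (Suc k))) + vr p (Suc (Suc (Suc k))) r"
    by (simp del: metal.simps)
  also have "\<dots> = int a * (int (p - 2) * int (metal p (Suc k)) - int (metal p k)) + (int (p - 2) * vr p (Suc (Suc k)) r - vr p (Suc k) r)"
    by (simp only: metal_rec Cons)
  finally show ?case by (simp del: metal.simps add: algebra_simps)
qed

lemma vi_rec: "vi p (Suc (Suc k)) w = int (p - 2) * vi p (Suc k) w - vi p k w"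
  by (simp add: vi_def vr_rec)

lemma metal0[simp]: "metal p 0 = 1" by simp
lemma metal1[simp]: "metal p (Suc 0) = p - 2" by simp

lemma x_d: "Suc (p - 3) = p - 2" "int (p - 3) = int (p - 2) - 1" "p - 3 \<ge> 2"
  using p5 by auto

definition cc :: "nat list \<Rightarrow> nat" where
  "cc w = (if Tw p w then p - 3 else p - 2)"

lemma inc_props: "nzm_admissible p w \<Longrightarrow> nzm_admissible p (inc p w) \<and>
   vi p 0 (inc p w) = vi p 0 w + 1 \<and> vi p 1 (inc p w) = vi p 1 w + int (cc w)"
proof (induction w rule: rev_induct)
  case Nil
  have "nzm_admissible p ([] @ [1])" unfolding adm_snoc using p5 by simp
  then show ?case using p5 by (simp add: vi_def cc_def)
next
  case (snoc a w)
  have aw: "nzm_admissible p w" "1 \<le> a" "a \<le> p - 2" "\<not> (a = p - 2 \<and> Tw p w)"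
    using snoc.prems unfolding adm_snoc by auto
  show ?case
  proof (cases "a < p - 2 \<and> \<not> (a = p - 3 \<and> Tw p w)")
    case True
    have e: "inc p (w @ [a]) = w @ [Suc a]" unfolding inc_snoc if_P[OF True] ..
    have "\<not> Tw p (w @ [a])" using True unfolding Tw_snoc by auto
    moreover have "nzm_admissible p (w @ [Suc a])" unfolding adm_snoc using aw True x_d by auto
    ultimately show ?thesis unfolding e by (simp add: vi_snoc cc_def algebra_simps)
  next
    case False
    have e: "inc p (w @ [a]) = inc p w @ [1]" unfolding inc_snoc if_not_P[OF False] ..
    have ca: "cc w = a" using False aw x_d unfolding cc_def by auto
    have T: "Tw p (w @ [a])" using False aw x_d unfolding Tw_snoc by auto
    have IH: "nzm_admissible p (inc p w)" "vi p 0 (inc p w) = vi p 0 w + 1"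
      "vi p 1 (inc p w) = vi p 1 w + int a"
      using snoc.IH aw ca by auto
    have "nzm_admissible p (inc p w @ [1])" unfolding adm_snoc using IH x_d by auto
    moreover have "vi p 0 (inc p w @ [1]) = vi p 0 (w @ [a]) + 1"
      using IH by (simp add: vi_snoc)
    moreover have "vi p 1 (inc p w @ [1]) = vi p 1 (w @ [a]) + int (cc (w @ [a]))"
    proof -
      have "vi p 1 (inc p w @ [1]) = int (p - 2) + (int (p - 2) * vi p 1 (inc p w) - vi p 0 (inc p w))"
        using vi_rec[of 0 "inc p w"] by (simp add: vi_snoc numeral_2_eq_2)
      moreover have "vi p 1 (w @ [a]) = int a * int (p - 2) + (int (p - 2) * vi p 1 w - vi p 0 w)"
        using vi_rec[of 0 w] by (simp add: vi_snoc numeral_2_eq_2)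
      moreover have "int (cc (w @ [a])) = int (p - 2) - 1" using T x_d unfolding cc_def by simp
      ultimately show ?thesis using IH by (simp add: algebra_simps)
    qed
    ultimately show ?thesis unfolding e by simp
  qed
qed

lemma vr_nonneg: "0 \<le> vr p' k r"
  by (induction r arbitrary: k) auto

lemma cw_0[simp]: "cw p 0 = []" by (simp add: cw_def)
lemma cw_Suc: "cw p (Suc n) = inc p (cw p n)" by (simp add: cw_def)

lemma cw_adm_val: "nzm_admissible p (cw p n) \<and> vi p 0 (cw p n) = int n"
  by (induction n) (simp_all add: cw_Suc inc_props)

lemma cw_adm: "nzm_admissible p (cw p n)" using cw_adm_val by simp
lemma cw_val: "vi p 0 (cw p n) = int n" using cw_adm_val by simp

definition sg :: "nat \<Rightarrow> nat" where "sg q = nat (vi p 1 (cw p q))"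
definition Tn :: "nat \<Rightarrow> bool" where "Tn q = Tw p (cw p q)"
definition cn :: "nat \<Rightarrow> nat" where "cn q = (if Tn q then p - 3 else p - 2)"

lemma sg_int: "int (sg q) = vi p 1 (cw p q)"
  unfolding sg_def vi_def using vr_nonneg by simp

lemma cn_cc: "cn q = cc (cw p q)" by (simp add: cn_def cc_def Tn_def)

lemma sg_0[simp]: "sg 0 = 0" by (simp add: sg_def)

lemma sg_Suc: "sg (Suc q) = sg q + cn q"
proof -
  have "int (sg (Suc q)) = int (sg q) + int (cn q)"
    unfolding sg_int cw_Suc cn_cc using inc_props[OF cw_adm] by simp
  then show ?thesis by simp
qed

lemma cn_ge: "cn q \<ge> 2" "cn q \<le> p - 2" using x_d by (auto simp: cn_def)

lemma Tn_0[simp]: "\<not> Tn 0" by (simp add: Tn_def)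
lemma cn_0[simp]: "cn 0 = p - 2" by (simp add: cn_def)

lemma cw_inj: "cw p q = cw p q' \<Longrightarrow> q = q'"
proof -
  assume e: "cw p q = cw p q'"
  have "int q = vi p 0 (cw p q)" using cw_val[of q] by simp
  also have "\<dots> = int q'" unfolding e using cw_val[of q'] by simp
  finally show "q = q'" by simp
qed

lemma blk_from1:
  assumes b1: "cw p (sg q + 1) = cw p q @ [1]"
  shows "1 \<le> a \<Longrightarrow> a \<le> cn q \<Longrightarrow> cw p (sg q + a) = cw p q @ [a]"
proof (induction a)
  case 0
  then show ?case by simp
next
  case (Suc a)
  show ?case
  proof (cases "a = 0")
    case True
    then show ?thesis using b1 by simp
  next
    case False
    then have IH: "cw p (sg q + a) = cw p q @ [a]" using Suc by simp
    have c: "a < p - 2 \<and> \<not> (a = p - 3 \<and> Tw p (cw p q))"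
      using Suc.prems x_d unfolding cn_def Tn_def by (auto split: if_splits)
    have "cw p (sg q + Suc a) = inc p (cw p q @ [a])" using IH by (simp add: cw_Suc)
    also have "\<dots> = cw p q @ [Suc a]" unfolding inc_snoc if_P[OF c] ..
    finally show ?thesis .
  qed
qed

lemma blk1: "cw p (sg q + 1) = cw p q @ [1]"
proof (induction q)
  case 0
  then show ?case by (simp add: cw_Suc)
next
  case (Suc q)
  have b: "cw p (sg q + cn q) = cw p q @ [cn q]"
    using blk_from1[OF Suc] cn_ge[of q] by simp
  have c: "\<not> (cn q < p - 2 \<and> \<not> (cn q = p - 3 \<and> Tw p (cw p q)))"
    unfolding cn_def Tn_def by auto
  have "cw p (sg (Suc q) + 1) = inc p (cw p (sg q + cn q))" by (simp add: sg_Suc cw_Suc)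
  also have "\<dots> = inc p (cw p q) @ [1]" unfolding b inc_snoc if_not_P[OF c] ..
  also have "\<dots> = cw p (Suc q) @ [1]" by (simp add: cw_Suc)
  finally show ?case .
qed

lemma blk: "1 \<le> a \<Longrightarrow> a \<le> cn q \<Longrightarrow> cw p (sg q + a) = cw p q @ [a]"
  using blk_from1[OF blk1] by blast

lemma adm_eq_cw: "nzm_admissible p w \<Longrightarrow> w = cw p (nat (vi p 0 w))"
proof (induction w rule: rev_induct)
  case Nil
  then show ?case by simp
next
  case (snoc a w)
  have aw: "nzm_admissible p w" "1 \<le> a" "a \<le> p - 2" "\<not> (a = p - 2 \<and> Tw p w)"
    using snoc.prems unfolding adm_snoc by auto
  define q where "q = nat (vi p 0 w)"
  have w: "w = cw p q" using snoc.IH aw q_def by simp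
  have "a \<le> cn q" using aw x_d unfolding cn_def Tn_def w[symmetric] by auto
  then have e: "w @ [a] = cw p (sg q + a)" using blk[of a q] aw w by simp
  have v: "vi p 0 (w @ [a]) = int (sg q + a)"
    unfolding vi_snoc using sg_int[of q] w by simp
  have "nat (vi p 0 (w @ [a])) = sg q + a" unfolding v by (rule nat_int)
  then show ?case using e by simp
qed

lemma code_cw: "nzm_code p n = cw p n"
  unfolding nzm_code_def
proof (rule the_equality)
  show "nzm_admissible p (cw p n) \<and> nzm_val p (cw p n) = n"
    using cw_adm[of n] cw_val[of n] nzm_val_vi[of p "cw p n"] by simp
next
  fix w assume "nzm_admissible p w \<and> nzm_val p w = n"
  then show "w = cw p n" using adm_eq_cw[of w] nzm_val_vi[of p w] by (metis nat_int)
qed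

lemma blk_uniq:
  assumes "1 \<le> a" "a \<le> cn q" "1 \<le> a'" "a' \<le> cn q'" "sg q + a = sg q' + a'"
  shows "q = q' \<and> a = a'"
proof -
  have "cw p q @ [a] = cw p q' @ [a']" using blk[of a q] blk[of a' q'] assms by simp
  then show ?thesis using cw_inj by simp
qed

lemma blk_exists:
  assumes "n \<ge> 1"
  shows "\<exists>q a. 1 \<le> a \<and> a \<le> cn q \<and> n = sg q + a"
proof -
  have "cw p n \<noteq> []" using cw_val[of n] assms by auto
  then obtain w a where e: "cw p n = w @ [a]" by (metis rev_exhaust)
  have "nzm_admissible p (w @ [a])" using cw_adm[of n] e by simp
  then have aw: "nzm_admissible p w" "1 \<le> a" "a \<le> p - 2" "\<not> (a = p - 2 \<and> Tw p w)"
    unfolding adm_snoc by auto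
  define q where "q = nat (vi p 0 w)"
  have w: "w = cw p q" using adm_eq_cw aw q_def by simp
  have a: "a \<le> cn q" using aw x_d unfolding cn_def Tn_def w[symmetric] by auto
  then have "cw p n = cw p (sg q + a)" using blk[of a q] aw w e by simp
  then have "n = sg q + a" using cw_inj by simp
  then show ?thesis using a aw by blast
qed

lemma Tn_blk: "1 \<le> a \<Longrightarrow> a \<le> cn q \<Longrightarrow> Tn (sg q + a) \<longleftrightarrow> a = cn q"
proof -
  assume a: "1 \<le> a" "a \<le> cn q"
  have "Tn (sg q + a) \<longleftrightarrow> a = p - 2 \<or> (a = p - 3 \<and> Tn q)"
    unfolding Tn_def blk[OF a] Tw_snoc ..
  then show ?thesis using a x_d unfolding cn_def by (cases "Tn q") auto
qed

lemma sig_blk: "1 \<le> a \<Longrightarrow> a \<le> cn q \<Longrightarrow> nzm_signature p (sg q + a) = a"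
  unfolding nzm_signature_def code_cw using blk[of a q] by simp

lemma sg_ge: "sg q \<ge> 2 * q"
proof (induction q)
  case 0 then show ?case by simp
next
  case (Suc q) then show ?case using cn_ge(1)[of q] by (simp add: sg_Suc)
qed

lemma sg_1: "sg 1 = p - 2" using sg_Suc[of 0] by simp

lemma sg_ge1: "q \<ge> 1 \<Longrightarrow> sg q \<ge> 2 * q + 1"
proof (induction q)
  case 0 then show ?case by simp
next
  case (Suc q)
  show ?case
  proof (cases "q = 0")
    case True then show ?thesis using sg_1 x_d by simp
  next
    case False then show ?thesis using Suc.IH cn_ge(1)[of q] by (simp add: sg_Suc)
  qed
qed

lemma sg_mono: "q < q' \<Longrightarrow> sg q + cn q \<le> sg q'"
proof (induction q' )
  case 0 then show ?case by simp
next
  case (Suc q')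
  show ?case
  proof (cases "q = q'")
    case True then show ?thesis by (simp add: sg_Suc)
  next
    case False then show ?thesis using Suc by (simp add: sg_Suc)
  qed
qed

lemma ff_ge: "ff p n \<ge> 2 + 2 * n"
proof (induction n)
  case 0 then show ?case by (simp add: ff_0)
next
  case (Suc n)
  have "p - 3 \<ge> 2" "p - 2 \<ge> 2" using p5 by auto
  then show ?case using Suc.IH by (cases "bl p n (Suc n)") (simp_all add: ff_Suc)
qed

lemma ff_mono: "m < n \<Longrightarrow> ff p m < ff p n"
proof (induction n)
  case 0 then show ?case by simp
next
  case (Suc n)
  have "ff p n < ff p (Suc n)" using p5 by (simp add: ff_Suc)
  then show ?case using Suc by (cases "m = n") auto
qed

lemma bl_char: "bl p n i \<longleftrightarrow> i = 1 \<or> (\<exists>m. 1 \<le> m \<and> m \<le> n \<and> Suc i = ff p m)"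
proof (induction n arbitrary: i)
  case 0 then show ?case by (simp add: bl_0)
next
  case (Suc n)
  show ?case
  proof (cases "ff p n \<le> i \<and> i < ff p (Suc n)")
    case True
    have "i \<noteq> 1" using True ff_ge[of n] by simp
    moreover have "\<not> (1 \<le> m \<and> m \<le> n \<and> Suc i = ff p m)" for m
    proof
      assume "1 \<le> m \<and> m \<le> n \<and> Suc i = ff p m"
      then have "ff p m \<le> ff p n" using ff_mono[of m n] by (cases "m = n") auto
      then show False using True \<open>1 \<le> m \<and> m \<le> n \<and> Suc i = ff p m\<close> by simp
    qed
    ultimately show ?thesis unfolding bl_Suc using True by (auto simp: le_Suc_eq)
  next
    case False
    have "Suc i \<noteq> ff p (Suc n)" using False ff_mono[of n "Suc n"] by auto
    then show ?thesis unfolding bl_Suc using False Suc.IH by (auto simp: le_Suc_eq)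
  qed
qed

definition B :: "nat \<Rightarrow> bool" where
  "B \<nu> \<longleftrightarrow> \<nu> = 1 \<or> (\<exists>m. 1 \<le> m \<and> Suc \<nu> = ff p m)"

lemma bl_B: "n + 1 \<ge> \<nu> \<Longrightarrow> bl p n \<nu> \<longleftrightarrow> B \<nu>"
proof -
  assume n: "n + 1 \<ge> \<nu>"
  have "m \<le> n" if "Suc \<nu> = ff p m" for m using ff_ge[of m] that n by simp
  then show ?thesis unfolding bl_char B_def by blast
qed

lemma black_B: "mt_black p rightmost \<nu> = B \<nu>"
  using bl_B[of \<nu> \<nu>] by (simp add: mt_black_def bl_def)

lemma ff_SucB: "ff p (Suc n) = ff p n + (if B (Suc n) then p - 3 else p - 2)"
  using bl_B[of "Suc n" n] by (simp add: ff_Suc)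

lemma first_ff: "mt_first p rightmost \<nu> = ff p (\<nu> - 1)"
  by (simp add: mt_first_def ff_def)

lemma deg_B: "mt_deg p rightmost \<nu> = (if B \<nu> then p - 3 else p - 2)"
  by (simp add: mt_deg_def black_B)

definition E :: "nat \<Rightarrow> bool" where
  "E \<nu> \<longleftrightarrow> \<not> B \<nu> \<and> (nzm_signature p \<nu> = 1 \<or> nzm_signature p \<nu> = p - 2)"

lemma E_blk: "1 \<le> a \<Longrightarrow> a \<le> cn q \<Longrightarrow> E (sg q + a) \<longleftrightarrow> \<not> B (sg q + a) \<and> (a = 1 \<or> a = p - 2)"
  unfolding E_def using sig_blk by simp

lemma Tsucc:
  assumes "n \<ge> 1" "1 \<le> a" "a \<le> cn q" "Suc n = sg q + a"
  shows "Tn n \<longleftrightarrow> a = 1"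
proof (cases "a = 1")
  case True
  then have n: "n = sg q" using assms by simp
  then have "q \<noteq> 0" using assms by (cases q) auto
  then obtain q0 where q: "q = Suc q0" by (cases q) auto
  have "n = sg q0 + cn q0" using n q sg_Suc by simp
  then have "Tn n" using Tn_blk[of "cn q0" q0] cn_ge[of q0] by simp
  then show ?thesis using True by simp
next
  case False
  then have "n = sg q + (a - 1)" "1 \<le> a - 1" "a - 1 \<le> cn q" using assms by auto
  then have "\<not> Tn n" using Tn_blk[of "a - 1" q] assms by simp
  then show ?thesis using False by simp
qed

lemma Z: "Tn q \<Longrightarrow> \<not> E (Suc (Suc q))"
proof -
  assume T: "Tn q"
  then have "q \<ge> 1" by (cases q) auto
  obtain q1 a1 where b: "1 \<le> a1" "a1 \<le> cn q1" "Suc q = sg q1 + a1"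
    using blk_exists[of "Suc q"] by auto
  then have "a1 = 1" using Tsucc[OF \<open>q \<ge> 1\<close> b] T by simp
  then have e: "Suc (Suc q) = sg q1 + 2" using b by simp
  have "nzm_signature p (Suc (Suc q)) = 2" unfolding e using sig_blk[of 2 q1] cn_ge[of q1] by simp
  moreover have "p - 2 \<noteq> 2" using p5 by arith
  ultimately show ?thesis unfolding E_def by simp
qed

lemma Bblk:
  assumes IH: "\<And>m'. 1 \<le> m' \<Longrightarrow> m' \<le> M \<Longrightarrow> ff p m' + of_bool (E (Suc m')) = sg m' + 1"
    and a: "1 \<le> a" "a \<le> cn q" and nu: "\<nu> = sg q + a" "\<nu> \<ge> 2" "\<nu> \<le> M + 2" and M: "M \<ge> 1"
  shows "B \<nu> \<longleftrightarrow> a + of_bool (E (Suc (Suc q))) = cn q"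
proof -
  have qM: "q + 1 \<le> M"
  proof (cases "q = 0")
    case True then show ?thesis using M by simp
  next
    case False
    then have "sg q \<ge> 2 * q + 1" using sg_ge1 by simp
    moreover have "sg q < M + 2" using nu a by linarith
    ultimately show ?thesis using False by linarith
  qed
  show ?thesis
  proof
    assume h: "a + of_bool (E (Suc (Suc q))) = cn q"
    have "ff p (Suc q) + of_bool (E (Suc (Suc q))) = sg (Suc q) + 1"
      using IH[of "Suc q"] qM by simp
    then have "ff p (Suc q) + of_bool (E (Suc (Suc q))) = sg q + cn q + 1"
      unfolding sg_Suc .
    then have "Suc \<nu> = ff p (Suc q)" using h nu(1) by linarith
    then show "B \<nu>" unfolding B_def by (intro disjI2 exI[of _ "Suc q"]) simp
  next
    assume "B \<nu>"
    then have "\<nu> = 1 \<or> (\<exists>m. 1 \<le> m \<and> Suc \<nu> = ff p m)" unfolding B_def .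
    moreover have "\<nu> \<noteq> 1" using nu(2) by linarith
    ultimately obtain m where m: "1 \<le> m" "Suc \<nu> = ff p m" by blast
    have "m \<le> M"
    proof (rule ccontr)
      assume "\<not> m \<le> M"
      then have "ff p m \<ge> 2 + 2 * (M + 1)" using ff_ge[of m] by arith
      then show False using m nu(3) by arith
    qed
    then have fm: "ff p m + of_bool (E (Suc m)) = sg m + 1" using IH m(1) by blast
    obtain q' where q': "m = Suc q'" using m(1) by (cases m) auto
    define e :: nat where "e = of_bool (E (Suc (Suc q')))"
    have e1: "e \<le> 1" unfolding e_def by simp
    define a' where "a' = cn q' - e"
    have c2: "cn q' \<ge> 2" by (rule cn_ge)
    have a': "1 \<le> a'" "a' \<le> cn q'" using c2 e1 unfolding a'_def by linarith+
    have "ff p m + e = sg q' + cn q' + 1" using fm unfolding q' e_def sg_Suc by simp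
    then have "sg q + a = sg q' + a'" using m(2) nu(1) c2 e1 unfolding a'_def by linarith
    then have "q = q'" "a = a'" using blk_uniq[OF a a'] by auto
    then show "a + of_bool (E (Suc (Suc q))) = cn q" using c2 e1 unfolding a'_def e_def by simp
  qed
qed

lemma main: "1 \<le> m \<Longrightarrow> ff p m + of_bool (E (Suc m)) = sg m + 1"
proof (induction m rule: less_induct)
  case (less m)
  show ?case
  proof (cases "m = 1")
    case True
    have "B 1" unfolding B_def by simp
    then have f1: "ff p 1 = p - 1" using ff_SucB[of 0] ff_0 p5 by simp
    have "2 \<le> cn 0" using p5 by simp
    then have "nzm_signature p (sg 0 + 2) = 2" using sig_blk[of 2 0] by simp
    then have "nzm_signature p 2 = 2" by (simp add: numeral_2_eq_2)
    moreover have "p - 2 \<noteq> 2" using p5 by arith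
    ultimately have "\<not> E 2" unfolding E_def by simp
    then show ?thesis using True f1 sg_1 p5 by (simp add: numeral_2_eq_2)
  next
    case False
    then obtain k where k: "m = Suc k" "k \<ge> 1" using less.prems by (cases m) auto
    have IH: "\<And>m'. 1 \<le> m' \<Longrightarrow> m' \<le> k \<Longrightarrow> ff p m' + of_bool (E (Suc m')) = sg m' + 1"
      using less.IH k by simp
    obtain q a where qa: "1 \<le> a" "a \<le> cn q" "Suc k = sg q + a" using blk_exists[of "Suc k"] by auto
    have Bnu: "B (Suc k) \<longleftrightarrow> a + of_bool (E (Suc (Suc q))) = cn q"
      using Bblk[OF IH qa(1,2) qa(3)] k by simp
    have Tk: "Tn k \<longleftrightarrow> a = 1" using Tsucc[OF k(2) qa] .
    have Enu: "E (Suc k) \<longleftrightarrow> \<not> B (Suc k) \<and> (a = 1 \<or> a = p - 2)" using E_blk[OF qa(1,2)] qa(3) by simp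
    have Zq: "Tn q \<Longrightarrow> \<not> E (Suc (Suc q))" by (rule Z)
    have Zq1: "Tn (Suc q) \<Longrightarrow> \<not> E (Suc (Suc (Suc q)))" by (rule Z)
    have x3: "p - 2 \<ge> 3" and dx: "p - 3 + 1 = p - 2" using p5 by auto
    have cnq: "cn q = (if Tn q then p - 3 else p - 2)" by (simp add: cn_def)
    have cnq1: "cn (Suc q) = (if Tn (Suc q) then p - 3 else p - 2)" by (simp add: cn_def)
    have ident: "of_bool (E (Suc (Suc k))) + of_bool (Tn k) = (of_bool (B (Suc k)) + of_bool (E (Suc k)) :: nat)"
    proof (cases "a < cn q")
      case True
      have a1: "1 \<le> a + 1" "a + 1 \<le> cn q" "Suc (Suc k) = sg q + (a + 1)" using True qa by auto
      have B2: "B (Suc (Suc k)) \<longleftrightarrow> a + 1 + of_bool (E (Suc (Suc q))) = cn q"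
        using Bblk[OF IH a1(1,2) a1(3)] k by simp
      have E2: "E (Suc (Suc k)) \<longleftrightarrow> \<not> B (Suc (Suc k)) \<and> (a + 1 = 1 \<or> a + 1 = p - 2)"
        using E_blk[OF a1(1,2)] a1(3) by simp
      show ?thesis
        by (rule ident1[OF x3 dx cnq qa(1) True Bnu Tk Enu B2 E2 Zq])
    next
      case False
      then have ac: "a = cn q" using qa by simp
      have a1: "1 \<le> (1::nat)" "1 \<le> cn (Suc q)" "Suc (Suc k) = sg (Suc q) + 1"
        using ac qa cn_ge[of "Suc q"] sg_Suc[of q] by auto
      have B2: "B (Suc (Suc k)) \<longleftrightarrow> 1 + of_bool (E (Suc (Suc (Suc q)))) = cn (Suc q)"
        using Bblk[OF IH a1(1,2) a1(3)] k by simp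
      have E2: "E (Suc (Suc k)) \<longleftrightarrow> \<not> B (Suc (Suc k))"
        using E_blk[OF a1(1,2)] a1(3) by simp
      have "a \<noteq> 1" using ac cn_ge[of q] by simp
      show ?thesis
        by (rule ident2[OF x3 dx cnq cnq1 ac Bnu Tk Enu B2 E2 Zq Zq1])
    qed
    have fk: "ff p k + of_bool (E (Suc k)) = sg k + 1" using IH[of k] k by simp
    have f1: "ff p (Suc k) = ff p k + (if B (Suc k) then p - 3 else p - 2)" by (rule ff_SucB)
    have s1: "sg (Suc k) = sg k + (if Tn k then p - 3 else p - 2)" using sg_Suc[of k] by (simp add: cn_def)
    show ?thesis unfolding k(1) by (rule ident3[OF x3 dx f1 s1 fk ident])
  qed
qed

declare upt_Suc[simp del]

lemma root_sons: "mt_sons p c 1 = [2..<p - 1]"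
proof -
  have b: "mt_black p c 1" by (simp add: mt_black_def Let_def)
  have "mt_first p c 1 = 2" by (simp add: mt_first_def)
  moreover have "mt_deg p c 1 = p - 3" using b by (simp add: mt_deg_def)
  moreover have "2 + (p - 3) = p - 1" using p5 by arith
  ultimately show ?thesis unfolding mt_sons_def by simp
qed

lemma code_small: "1 \<le> s \<Longrightarrow> s \<le> p - 2 \<Longrightarrow> nzm_code p s = [s]"
  unfolding code_cw using blk[of s 0] by simp

lemma sons_ff: "mt_sons p rightmost \<nu> = [ff p (\<nu> - 1)..<ff p (\<nu> - 1) + (if B \<nu> then p - 3 else p - 2)]"
  unfolding mt_sons_def first_ff deg_B ..

lemma B1: "B 1" unfolding B_def by simp

lemma E2_false: "\<not> E 2"
proof -
  have "2 \<le> cn 0" using p5 by simp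
  then have "nzm_signature p (sg 0 + 2) = 2" using sig_blk[of 2 0] by simp
  then have "nzm_signature p 2 = 2" by (simp add: numeral_2_eq_2)
  moreover have "p - 2 \<noteq> 2" using p5 by arith
  ultimately show ?thesis unfolding E_def by simp
qed

lemma clause1: "map (nzm_code p) (mt_sons p rightmost 1) = map (\<lambda>h. [h + 1]) [1..<p - 3] @ [[p - 2]]"
  unfolding root_sons
proof (rule nth_equalityI)
  show "length (map (nzm_code p) [2..<p - 1]) = length (map (\<lambda>h. [h + 1]) [1..<p - 3] @ [[p - 2]])"
    using p5 by simp
next
  fix i assume "i < length (map (nzm_code p) [2..<p - 1])"
  then have i: "i < p - 3" by simp
  have "map (nzm_code p) [2..<p - 1] ! i = [2 + i]" using i code_small[of "2 + i"] by simp
  moreover have "(map (\<lambda>h. [h + 1]) [1..<p - 3] @ [[p - 2]]) ! i = [2 + i]"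
    using i p5 by (cases "i < p - 4") (auto simp: nth_append)
  ultimately show "map (nzm_code p) [2..<p - 1] ! i = (map (\<lambda>h. [h + 1]) [1..<p - 3] @ [[p - 2]]) ! i"
    by simp
qed

lemma ffE: "\<nu> \<ge> 2 \<Longrightarrow> ff p (\<nu> - 1) + of_bool (E \<nu>) = sg (\<nu> - 1) + 1"
  using main[of "\<nu> - 1"] by simp

lemma clause2: "\<nu> \<ge> 2 \<Longrightarrow> B \<nu> \<Longrightarrow>
  map (nzm_code p) (mt_sons p rightmost \<nu>) = map (\<lambda>h. nzm_code p (\<nu> - 1) @ [h]) [1..<p - 2]"
proof -
  assume n: "\<nu> \<ge> 2" and b: "B \<nu>"
  then have "\<not> E \<nu>" unfolding E_def by simp
  then have f: "ff p (\<nu> - 1) = sg (\<nu> - 1) + 1" using ffE[OF n] by simp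
  have s: "mt_sons p rightmost \<nu> = [sg (\<nu> - 1) + 1..<sg (\<nu> - 1) + 1 + (p - 3)]"
    unfolding sons_ff f using b by simp
  show ?thesis unfolding s
  proof (rule nth_equalityI)
    show "length (map (nzm_code p) [sg (\<nu> - 1) + 1..<sg (\<nu> - 1) + 1 + (p - 3)]) = length (map (\<lambda>h. nzm_code p (\<nu> - 1) @ [h]) [1..<p - 2])"
      using p5 by (simp; arith)
  next
    fix i assume "i < length (map (nzm_code p) [sg (\<nu> - 1) + 1..<sg (\<nu> - 1) + 1 + (p - 3)])"
    then have i: "i < p - 3" by simp
    have "i + 1 \<le> cn (\<nu> - 1)" using i cn_def by auto
    then have "nzm_code p (sg (\<nu> - 1) + (i + 1)) = nzm_code p (\<nu> - 1) @ [i + 1]"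
      unfolding code_cw using blk[of "i + 1" "\<nu> - 1"] by simp
    show "map (nzm_code p) [sg (\<nu> - 1) + 1..<sg (\<nu> - 1) + 1 + (p - 3)] ! i = map (\<lambda>h. nzm_code p (\<nu> - 1) @ [h]) [1..<p - 2] ! i"
    proof -
      have "1 + i < p - 2" using i by arith
      then have u: "[1..<p - 2] ! i = i + 1" using nth_upt[of 1 i "p - 2"] by simp
      have "1 + i < p - 3 + (sg (\<nu> - 1) + 1) - sg (\<nu> - 1)" using i by arith
      have v: "[sg (\<nu> - 1) + 1..<sg (\<nu> - 1) + 1 + (p - 3)] ! i = sg (\<nu> - 1) + (i + 1)"
        using nth_upt[of "sg (\<nu> - 1) + 1" i "sg (\<nu> - 1) + 1 + (p - 3)"] i by simp
      show ?thesis using i u v \<open>nzm_code p (sg (\<nu> - 1) + (i + 1)) = nzm_code p (\<nu> - 1) @ [i + 1]\<close>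
        by simp
    qed
  qed
qed

lemma clause3: "\<nu> \<ge> 1 \<Longrightarrow> \<not> B \<nu> \<Longrightarrow> nzm_signature p \<nu> \<in> {1, p - 2} \<Longrightarrow>
  map (nzm_code p) (mt_sons p rightmost \<nu>) =
    (nzm_code p (\<nu> - 2) @ [p - 2]) # map (\<lambda>h. nzm_code p (\<nu> - 1) @ [h - 1]) [2..<p - 1]"
proof -
  assume n1: "\<nu> \<ge> 1" and b: "\<not> B \<nu>" and sg: "nzm_signature p \<nu> \<in> {1, p - 2}"
  have "\<nu> \<noteq> 1" using b B1 by auto
  have e: "E \<nu>" using b sg unfolding E_def by auto
  then have "\<nu> \<noteq> 2" using E2_false by auto
  then have n3: "\<nu> \<ge> 3" using n1 \<open>\<nu> \<noteq> 1\<close> by arith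
  have nn: "Suc (Suc (\<nu> - 2)) = \<nu>" using n3 by arith
  have "\<not> Tn (\<nu> - 2)" using Z[of "\<nu> - 2"] e nn by auto
  then have c: "cn (\<nu> - 2) = p - 2" by (simp add: cn_def)
  have s1: "sg (\<nu> - 1) = sg (\<nu> - 2) + (p - 2)" using sg_Suc[of "\<nu> - 2"] c nn
    by (metis diff_Suc_1)
  have c0: "nzm_code p (sg (\<nu> - 1)) = nzm_code p (\<nu> - 2) @ [p - 2]"
    unfolding code_cw s1 using blk[of "p - 2" "\<nu> - 2"] c p5 by simp
  have f: "ff p (\<nu> - 1) = sg (\<nu> - 1)" using ffE[of \<nu>] n3 e by simp
  define S where "S = sg (\<nu> - 1)"
  have s: "mt_sons p rightmost \<nu> = [S..<S + (p - 2)]"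
    unfolding sons_ff f S_def using b by simp
  show ?thesis unfolding s
  proof (rule nth_equalityI)
    show "length (map (nzm_code p) [S..<S + (p - 2)]) = length ((nzm_code p (\<nu> - 2) @ [p - 2]) # map (\<lambda>h. nzm_code p (\<nu> - 1) @ [h - 1]) [2..<p - 1])"
      using p5 by simp
  next
    fix i assume "i < length (map (nzm_code p) [S..<S + (p - 2)])"
    then have i: "i < p - 2" by simp
    have l: "map (nzm_code p) [S..<S + (p - 2)] ! i = nzm_code p (S + i)"
      using i nth_upt[of S i "S + (p - 2)"] by simp
    show "map (nzm_code p) [S..<S + (p - 2)] ! i = ((nzm_code p (\<nu> - 2) @ [p - 2]) # map (\<lambda>h. nzm_code p (\<nu> - 1) @ [h - 1]) [2..<p - 1]) ! i"
    proof (cases i)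
      case 0
      then show ?thesis unfolding l using c0 S_def by simp
    next
      case (Suc j)
      have j: "2 + j < p - 1" using i Suc by arith
      have u: "[2..<p - 1] ! j = 2 + j" using nth_upt[of 2 j "p - 1"] j by simp
      have "Suc j \<le> cn (\<nu> - 1)" using i Suc cn_def by auto
      then have "nzm_code p (S + Suc j) = nzm_code p (\<nu> - 1) @ [Suc j]"
        unfolding code_cw S_def using blk[of "Suc j" "\<nu> - 1"] by simp
      then show ?thesis unfolding l using Suc u j by simp
    qed
  qed
qed

lemma clause4: "\<nu> \<ge> 1 \<Longrightarrow> \<not> B \<nu> \<Longrightarrow> 1 < nzm_signature p \<nu> \<Longrightarrow> nzm_signature p \<nu> < p - 2 \<Longrightarrow>
  map (nzm_code p) (mt_sons p rightmost \<nu>) =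
    map (\<lambda>h. nzm_code p (\<nu> - 1) @ [h]) [1..<p - 2] @ [nzm_code p (\<nu> - 1) @ [p - 2]]"
proof -
  assume n1: "\<nu> \<ge> 1" and b: "\<not> B \<nu>" and g1: "1 < nzm_signature p \<nu>" and g2: "nzm_signature p \<nu> < p - 2"
  have "\<nu> \<noteq> 1" using b B1 by auto
  then have n2: "\<nu> \<ge> 2" using n1 by arith
  have e: "\<not> E \<nu>" using g1 g2 unfolding E_def by auto
  have f: "ff p (\<nu> - 1) = sg (\<nu> - 1) + 1" using ffE[of \<nu>] n2 e by simp
  obtain q a where qa: "1 \<le> a" "a \<le> cn q" "\<nu> = sg q + a" using blk_exists[of \<nu>] n1 by auto
  have "nzm_signature p \<nu> = a" using sig_blk[OF qa(1,2)] qa(3) by simp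
  moreover have "Tn (\<nu> - 1) \<longleftrightarrow> a = 1" using Tsucc[of "\<nu> - 1" a q] qa n2 by simp
  ultimately have "\<not> Tn (\<nu> - 1)" using g1 by simp
  then have c: "cn (\<nu> - 1) = p - 2" by (simp add: cn_def)
  define S where "S = sg (\<nu> - 1) + 1"
  have s: "mt_sons p rightmost \<nu> = [S..<S + (p - 2)]"
    unfolding sons_ff f S_def using b by simp
  show ?thesis unfolding s
  proof (rule nth_equalityI)
    show "length (map (nzm_code p) [S..<S + (p - 2)]) = length (map (\<lambda>h. nzm_code p (\<nu> - 1) @ [h]) [1..<p - 2] @ [nzm_code p (\<nu> - 1) @ [p - 2]])"
      using p5 by simp
  next
    fix i assume "i < length (map (nzm_code p) [S..<S + (p - 2)])"
    then have i: "i < p - 2" by simp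
    have l: "map (nzm_code p) [S..<S + (p - 2)] ! i = nzm_code p (sg (\<nu> - 1) + (i + 1))"
      using i nth_upt[of S i "S + (p - 2)"] S_def by simp
    have "i + 1 \<le> cn (\<nu> - 1)" using i c by simp
    then have k: "nzm_code p (sg (\<nu> - 1) + (i + 1)) = nzm_code p (\<nu> - 1) @ [i + 1]"
      unfolding code_cw using blk[of "i + 1" "\<nu> - 1"] by simp
    show "map (nzm_code p) [S..<S + (p - 2)] ! i = (map (\<lambda>h. nzm_code p (\<nu> - 1) @ [h]) [1..<p - 2] @ [nzm_code p (\<nu> - 1) @ [p - 2]]) ! i"
    proof (cases "i < p - 3")
      case True
      have u: "[1..<p - 2] ! i = 1 + i" using nth_upt[of 1 i "p - 2"] True by arith
      show ?thesis unfolding l k using True u by (simp add: nth_append)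
    next
      case False
      then have "i = p - 3" using i by arith
      moreover have "p - 3 + 1 = p - 2" using p5 by arith
      ultimately show ?thesis unfolding l k using False by (simp add: nth_append)
    qed
  qed
qed

lemma clause6: "\<nu> \<ge> 1 \<Longrightarrow> \<exists>s. nzm_code p s = nzm_code p \<nu> @ [1] \<and>
        (s = mt_sons p rightmost (\<nu> + 1) ! 0 \<or> s = mt_sons p rightmost (\<nu> + 1) ! 1)"
proof -
  assume n: "\<nu> \<ge> 1"
  have c: "nzm_code p (sg \<nu> + 1) = nzm_code p \<nu> @ [1]"
    unfolding code_cw using blk[of 1 \<nu>] cn_ge[of \<nu>] by simp
  define D where "D = (if B (\<nu> + 1) then p - 3 else p - 2)"
  have D: "D \<ge> 2" using p5 unfolding D_def by auto
  have s: "mt_sons p rightmost (\<nu> + 1) = [ff p \<nu>..<ff p \<nu> + D]"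
    unfolding sons_ff D_def by simp
  have s0: "mt_sons p rightmost (\<nu> + 1) ! 0 = ff p \<nu>" unfolding s using D by simp
  have s1: "mt_sons p rightmost (\<nu> + 1) ! 1 = ff p \<nu> + 1" unfolding s using D nth_upt[of "ff p \<nu>" 1 "ff p \<nu> + D"] by simp
  have m: "ff p \<nu> + of_bool (E (Suc \<nu>)) = sg \<nu> + 1" using main n by simp
  show ?thesis
  proof (cases "E (Suc \<nu>)")
    case True
    then show ?thesis using c s1 m by (intro exI[of _ "sg \<nu> + 1"]) simp
  next
    case False
    then show ?thesis using c s0 m by (intro exI[of _ "sg \<nu> + 1"]) simp
  qed
qed

lemma root_no: "a \<in> {1..p - 2} \<Longrightarrow> \<not> (\<forall>\<nu>\<ge>1. \<exists>!s. s \<in> set (mt_sons p c \<nu>) \<and> nzm_code p s = nzm_code p \<nu> @ [a])"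
proof
  assume "\<forall>\<nu>\<ge>1. \<exists>!s. s \<in> set (mt_sons p c \<nu>) \<and> nzm_code p s = nzm_code p \<nu> @ [a]"
  then obtain s where s: "s \<in> set (mt_sons p c 1)" "nzm_code p s = nzm_code p 1 @ [a]" by blast
  then have "2 \<le> s" "s \<le> p - 2" unfolding root_sons by auto
  then have "nzm_code p s = [s]" using code_small by simp
  moreover have "nzm_code p 1 = [1]" using code_small[of 1] p5 by simp
  ultimately show False using s by simp
qed

end

theorem theorem15:
  fixes p :: nat
  assumes "p \<ge> 5"
  shows
    "map (nzm_code p) (mt_sons p rightmost 1) = map (\<lambda>h. [h + 1]) [1..<p - 3] @ [[p - 2]]
   \<and> (\<forall>\<nu>\<ge>2. mt_black p rightmost \<nu> \<longrightarrow>
        map (nzm_code p) (mt_sons p rightmost \<nu>) = map (\<lambda>h. nzm_code p (\<nu> - 1) @ [h]) [1..<p - 2])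
   \<and> (\<forall>\<nu>\<ge>1. \<not> mt_black p rightmost \<nu> \<longrightarrow> nzm_signature p \<nu> \<in> {1, p - 2} \<longrightarrow>
        map (nzm_code p) (mt_sons p rightmost \<nu>) =
          (nzm_code p (\<nu> - 2) @ [p - 2]) # map (\<lambda>h. nzm_code p (\<nu> - 1) @ [h - 1]) [2..<p - 1])
   \<and> (\<forall>\<nu>\<ge>1. \<not> mt_black p rightmost \<nu> \<longrightarrow>
        1 < nzm_signature p \<nu> \<longrightarrow> nzm_signature p \<nu> < p - 2 \<longrightarrow>
        map (nzm_code p) (mt_sons p rightmost \<nu>) =
          map (\<lambda>h. nzm_code p (\<nu> - 1) @ [h]) [1..<p - 2] @ [nzm_code p (\<nu> - 1) @ [p - 2]])
   \<and> (\<forall>a\<in>{1..p - 2}. \<not> (\<forall>\<nu>\<ge>1. \<exists>!s. s \<in> set (mt_sons p rightmost \<nu>) \<and>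
        nzm_code p s = nzm_code p \<nu> @ [a]))
   \<and> (\<forall>\<nu>\<ge>1. \<exists>s. nzm_code p s = nzm_code p \<nu> @ [1] \<and>
        (s = mt_sons p rightmost (\<nu> + 1) ! 0 \<or> s = mt_sons p rightmost (\<nu> + 1) ! 1))
   \<and> (\<forall>\<alpha>. valid_assignment p \<alpha> \<longrightarrow> (\<forall>a\<in>{1..p - 2}. \<not> (\<forall>\<nu>\<ge>1. \<exists>!s.
        s \<in> set (mt_sons p (assign \<alpha>) \<nu>) \<and> nzm_code p s = nzm_code p \<nu> @ [a])))"
proof -
  note p = assms
  have c1: "map (nzm_code p) (mt_sons p rightmost 1) = map (\<lambda>h. [h + 1]) [1..<p - 3] @ [[p - 2]]"
    by (rule clause1[OF p])
  have c2: "\<forall>\<nu>\<ge>2. mt_black p rightmost \<nu> \<longrightarrow>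
        map (nzm_code p) (mt_sons p rightmost \<nu>) = map (\<lambda>h. nzm_code p (\<nu> - 1) @ [h]) [1..<p - 2]"
    using clause2[OF p] black_B[OF p] by auto
  have c3: "\<forall>\<nu>\<ge>1. \<not> mt_black p rightmost \<nu> \<longrightarrow> nzm_signature p \<nu> \<in> {1, p - 2} \<longrightarrow>
        map (nzm_code p) (mt_sons p rightmost \<nu>) =
          (nzm_code p (\<nu> - 2) @ [p - 2]) # map (\<lambda>h. nzm_code p (\<nu> - 1) @ [h - 1]) [2..<p - 1]"
    using clause3[OF p] black_B[OF p] by auto
  have c4: "\<forall>\<nu>\<ge>1. \<not> mt_black p rightmost \<nu> \<longrightarrow>
        1 < nzm_signature p \<nu> \<longrightarrow> nzm_signature p \<nu> < p - 2 \<longrightarrow>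
        map (nzm_code p) (mt_sons p rightmost \<nu>) =
          map (\<lambda>h. nzm_code p (\<nu> - 1) @ [h]) [1..<p - 2] @ [nzm_code p (\<nu> - 1) @ [p - 2]]"
    using clause4[OF p] black_B[OF p] by auto
  have c5: "\<forall>a\<in>{1..p - 2}. \<not> (\<forall>\<nu>\<ge>1. \<exists>!s. s \<in> set (mt_sons p rightmost \<nu>) \<and>
        nzm_code p s = nzm_code p \<nu> @ [a])"
    using root_no[OF p] by blast
  have c6: "\<forall>\<nu>\<ge>1. \<exists>s. nzm_code p s = nzm_code p \<nu> @ [1] \<and>
        (s = mt_sons p rightmost (\<nu> + 1) ! 0 \<or> s = mt_sons p rightmost (\<nu> + 1) ! 1)"
    using clause6[OF p] by blast
  have c7: "\<forall>\<alpha>. valid_assignment p \<alpha> \<longrightarrow> (\<forall>a\<in>{1..p - 2}. \<not> (\<forall>\<nu>\<ge>1. \<exists>!s.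
        s \<in> set (mt_sons p (assign \<alpha>) \<nu>) \<and> nzm_code p s = nzm_code p \<nu> @ [a]))"
    using root_no[OF p] by blast
  show ?thesis using c1 c2 c3 c4 c5 c6 c7 by blast
qed

end
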